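(* Let $(X,\mathcal{O}(X))$ be a measurable space, $\mathcal{A}$ a unital $C^*$-algebra and $\mathcal{H}$ a Hilbert space. If $\mathcal{I}:\mathcal{O}(X)\to CP(\mathcal{A},\mathcal{B}(\mathcal{H}))$ is a pure CP instrument, then its POVM marginal $\mu_\mathcal{I}$ is trivial, i.e. for every $A\in\mathcal{O}(X)$ either $\mu_\mathcal{I}(A)=0$ or $\mu_\mathcal{I}(A)=\mu_\mathcal{I}(X)$.
   Context: A CP instrument is a map $\mathcal{I}$ from $\mathcal{O}(X)$ to the completely positive maps $\mathcal{A}\to\mathcal{B}(\mathcal{H})$ such that for all $a\in\mathcal{A}$, $h,k\in\mathcal{H}$, $A\mapsto\langle h,\mathcal{I}(A)(a)k\rangle$ is a countably additive complex measure. Its POVM marginal is $\mu_\mathcal{I}(A)=\mathcal{I}(A)(1_\mathcal{A})$. A CP instrument $\mathcal{J}$ is dominated by $\mathcal{I}$ if $\mathcal{I}-\mathcal{J}$ is a CP instrument; $\mathcal{I}$ is pure if every CP instrument dominated by $\mathcal{I}$ equals $t\mathcal{I}$ for some $t\in[0,1]$. *)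

theory Defs
  imports "HOL-Analysis.Analysis"
begin

class complex_normed_vector = real_normed_vector +
  fixes scaleC :: "complex \<Rightarrow> 'a \<Rightarrow> 'a"
  assumes scaleC_add_right: "scaleC c (x + y) = scaleC c x + scaleC c y"
    and scaleC_add_left: "scaleC (c + d) x = scaleC c x + scaleC d x"
    and scaleC_scaleC: "scaleC c (scaleC d x) = scaleC (c * d) x"
    and scaleC_one: "scaleC 1 x = x"
    and scaleR_scaleC: "scaleR r x = scaleC (complex_of_real r) x"
    and norm_scaleC: "norm (scaleC c x) = cmod c * norm x"

text \<open>Complex inner product, linear in the second and conjugate-linear in the
  first argument; the norm is the one induced by the inner product.\<close>
class complex_inner = complex_normed_vector +
  fixes cinner :: "'a \<Rightarrow> 'a \<Rightarrow> complex"
  assumes cinner_commute: "cinner x y = cnj (cinner y x)"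
    and cinner_add_right: "cinner x (y + z) = cinner x y + cinner x z"
    and cinner_scaleC_right: "cinner x (scaleC c y) = c * cinner x y"
    and cinner_self_nonneg: "Im (cinner x x) = 0 \<and> 0 \<le> Re (cinner x x)"
    and cinner_self_eq_zero: "cinner x x = 0 \<longleftrightarrow> x = 0"
    and norm_eq_sqrt_cinner: "norm x = sqrt (Re (cinner x x))"

class chilbert_space = complex_inner + complete_space

class unital_cstar_algebra = complex_normed_vector + real_normed_algebra_1 + banach +
  fixes cstar :: "'a \<Rightarrow> 'a"
  assumes scaleC_mult_left: "scaleC c x * y = scaleC c (x * y)"
    and mult_scaleC_right: "x * scaleC c y = scaleC c (x * y)"
    and cstar_cstar: "cstar (cstar x) = x"
    and cstar_add: "cstar (x + y) = cstar x + cstar y"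
    and cstar_scaleC: "cstar (scaleC c x) = scaleC (cnj c) (cstar x)"
    and cstar_mult: "cstar (x * y) = cstar y * cstar x"
    and cstar_identity: "norm (cstar x * x) = norm x * norm x"

definition bounded_clinear_op :: "('h::complex_normed_vector \<Rightarrow> 'h) \<Rightarrow> bool" where
  "bounded_clinear_op T \<longleftrightarrow>
     (\<forall>x y. T (x + y) = T x + T y) \<and> (\<forall>c x. T (scaleC c x) = scaleC c (T x)) \<and>
     (\<exists>K. \<forall>x. norm (T x) \<le> norm x * K)"

definition cnonneg :: "complex \<Rightarrow> bool" where
  "cnonneg z \<longleftrightarrow> Im z = 0 \<and> 0 \<le> Re z"

text \<open>Completely positive map \<open>\<phi> : A \<rightarrow> B(H)\<close>: a linear map with values in the
  bounded operators such that every amplification \<open>\<phi>\<^sub>n : M\<^sub>n(A) \<rightarrow> M\<^sub>n(B(H)) = B(H\<^sup>n)\<close>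
  is positive. Positive elements of the C*-algebra \<open>M\<^sub>n(A)\<close> are those of the form
  \<open>b\<^sup>* b\<close>, i.e. \<open>(b\<^sup>*b)\<^sub>i\<^sub>j = \<Sum>\<^sub>k (b\<^sub>k\<^sub>i)\<^sup>* b\<^sub>k\<^sub>j\<close>; an operator matrix \<open>[T\<^sub>i\<^sub>j]\<close> on \<open>H\<^sup>n\<close> is positive iff
  \<open>\<Sum>\<^sub>i\<^sub>j \<langle>h\<^sub>i, T\<^sub>i\<^sub>j h\<^sub>j\<rangle> \<ge> 0\<close> for all \<open>h \<in> H\<^sup>n\<close>.\<close>
definition cp_map :: "('a::unital_cstar_algebra \<Rightarrow> ('h::chilbert_space \<Rightarrow> 'h)) \<Rightarrow> bool" where
  "cp_map \<phi> \<longleftrightarrow>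
     (\<forall>a b x. \<phi> (a + b) x = \<phi> a x + \<phi> b x) \<and>
     (\<forall>c a x. \<phi> (scaleC c a) x = scaleC c (\<phi> a x)) \<and>
     (\<forall>a. bounded_clinear_op (\<phi> a)) \<and>
     (\<forall>(n::nat) (b::nat \<Rightarrow> nat \<Rightarrow> 'a) (h::nat \<Rightarrow> 'h).
        cnonneg (\<Sum>i<n. \<Sum>j<n. cinner (h i) (\<phi> (\<Sum>k<n. cstar (b k i) * b k j) (h j))))"

definition cp_instrument ::
  "'x measure \<Rightarrow> ('x set \<Rightarrow> 'a::unital_cstar_algebra \<Rightarrow> ('h::chilbert_space \<Rightarrow> 'h)) \<Rightarrow> bool" where
  "cp_instrument M I \<longleftrightarrow>
     (\<forall>A\<in>sets M. cp_map (I A)) \<and>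
     (\<forall>a h k. \<forall>F::nat \<Rightarrow> 'x set. range F \<subseteq> sets M \<longrightarrow> disjoint_family F \<longrightarrow>
        (\<lambda>n. cinner h (I (F n) a k)) sums cinner h (I (\<Union>n. F n) a k))"

definition povm_marginal ::
  "('x set \<Rightarrow> 'a::unital_cstar_algebra \<Rightarrow> ('h::chilbert_space \<Rightarrow> 'h)) \<Rightarrow> 'x set \<Rightarrow> ('h \<Rightarrow> 'h)" where
  "povm_marginal I A = I A 1"

definition dominated_by ::
  "'x measure \<Rightarrow> ('x set \<Rightarrow> 'a::unital_cstar_algebra \<Rightarrow> ('h::chilbert_space \<Rightarrow> 'h)) \<Rightarrow>
   ('x set \<Rightarrow> 'a \<Rightarrow> ('h \<Rightarrow> 'h)) \<Rightarrow> bool" where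
  "dominated_by M J I \<longleftrightarrow> cp_instrument M J \<and> cp_instrument M (\<lambda>A a x. I A a x - J A a x)"

definition pure_instrument ::
  "'x measure \<Rightarrow> ('x set \<Rightarrow> 'a::unital_cstar_algebra \<Rightarrow> ('h::chilbert_space \<Rightarrow> 'h)) \<Rightarrow> bool" where
  "pure_instrument M I \<longleftrightarrow> cp_instrument M I \<and>
     (\<forall>J. dominated_by M J I \<longrightarrow>
        (\<exists>t::real. 0 \<le> t \<and> t \<le> 1 \<and>
           (\<forall>A\<in>sets M. \<forall>a x. J A a x = scaleC (complex_of_real t) (I A a x))))"

end

theory Submission
  imports Defs
begin

lemma cinner_zero_right': "cinner x (0::'a::complex_inner) = 0"
  using cinner_add_right[of x "0::'a" 0] by simp

lemma cinner_minus_right': "cinner x (- y::'a::complex_inner) = - cinner x y"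
proof -
  have "cinner x y + cinner x (-y) = 0"
    using cinner_add_right[of x y "-y"] by (simp add: cinner_zero_right')
  then show ?thesis by (metis add.commute neg_eq_iff_add_eq_0)
qed

lemma cinner_diff_right': "cinner x (y - z::'a::complex_inner) = cinner x y - cinner x z"
  by (metis diff_conv_add_uminus cinner_add_right cinner_minus_right' diff_conv_add_uminus)

lemma vec_eq_cinner:
  assumes "\<And>h. cinner h u = cinner h (v::'a::complex_inner)"
  shows "u = v"
proof -
  have "cinner (u - v) (u - v) = cinner (u - v) u - cinner (u - v) v" by (rule cinner_diff_right')
  also have "\<dots> = 0" using assms[of "u-v"] by simp
  finally have "u - v = 0" using cinner_self_eq_zero by blast
  then show ?thesis by simp
qed

lemma instr_empty:
  assumes "cp_instrument M I"
  shows "I {} a k = 0"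
proof (rule vec_eq_cinner)
  fix h
  have "(\<lambda>n. cinner h (I ((\<lambda>n. {}) n) a k)) sums cinner h (I (\<Union>n. (\<lambda>n. {}) n) a k)"
    using assms[unfolded cp_instrument_def, THEN conjunct2, rule_format, of "\<lambda>n. {}"]
    by (simp add: disjoint_family_on_def)
  then have "(\<lambda>n. cinner h (I {} a k)) sums cinner h (I {} a k)" by simp
  then have "(\<lambda>n. cinner h (I {} a k)) \<longlonglongrightarrow> 0"
    using summable_LIMSEQ_zero sums_summable by blast
  then have "cinner h (I {} a k) = 0" by (simp add: LIMSEQ_const_iff)
  then show "cinner h (I {} a k) = cinner h 0" by (simp add: cinner_zero_right')
qed

lemma instr_add:
  assumes "cp_instrument M I" "C \<in> sets M" "D \<in> sets M" "C \<inter> D = {}"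
  shows "I (C \<union> D) a k = I C a k + I D a k"
proof (rule vec_eq_cinner)
  fix h
  have r: "range (binaryset C D) \<subseteq> sets M" using assms by (auto simp: range_binaryset_eq)
  have d: "disjoint_family (binaryset C D)"
    using assms(4) by (auto simp: disjoint_family_on_def binaryset_def Int_commute)
  have "(\<lambda>n. cinner h (I (binaryset C D n) a k)) sums cinner h (I (\<Union>n. binaryset C D n) a k)"
    using assms(1) r d unfolding cp_instrument_def by blast
  moreover have "(\<lambda>n. (\<lambda>S. cinner h (I S a k)) (binaryset C D n)) sums
     (cinner h (I C a k) + cinner h (I D a k))"
    by (rule binaryset_sums) (simp add: instr_empty[OF assms(1)] cinner_zero_right')
  ultimately have "cinner h (I (\<Union>n. binaryset C D n) a k) = cinner h (I C a k) + cinner h (I D a k)"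
    by (rule sums_unique2)
  then show "cinner h (I (C \<union> D) a k) = cinner h (I C a k + I D a k)"
    unfolding UN_binaryset_eq cinner_add_right .
qed

lemma instr_diff:
  assumes "cp_instrument M I" "B \<in> sets M" "A \<in> sets M"
  shows "I B a k - I (B \<inter> A) a k = I (B - A) a k"
proof -
  have e: "(B \<inter> A) \<union> (B - A) = B" by blast
  have "I ((B \<inter> A) \<union> (B - A)) a k = I (B \<inter> A) a k + I (B - A) a k"
    by (rule instr_add) (use assms in auto)
  then have "I B a k = I (B \<inter> A) a k + I (B - A) a k" unfolding e .
  then show ?thesis by (metis add_diff_cancel_left')
qed

lemma restrict_instr:
  assumes "cp_instrument M I" "A \<in> sets M"
  shows "cp_instrument M (\<lambda>B. I (B \<inter> A))"
  unfolding cp_instrument_def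
proof (intro conjI ballI allI impI)
  fix B assume "B \<in> sets M"
  then show "cp_map (I (B \<inter> A))" using assms unfolding cp_instrument_def by auto
next
  fix a h k and F :: "nat \<Rightarrow> _"
  assume "range F \<subseteq> sets M" "disjoint_family F"
  then have "range (\<lambda>n. F n \<inter> A) \<subseteq> sets M" "disjoint_family (\<lambda>n. F n \<inter> A)"
    using assms(2) by (auto simp: disjoint_family_on_def)
  then have "(\<lambda>n. cinner h (I (F n \<inter> A) a k)) sums cinner h (I (\<Union>n. F n \<inter> A) a k)"
    using assms(1) unfolding cp_instrument_def by blast
  moreover have "(\<Union>n. F n \<inter> A) = (\<Union>n. F n) \<inter> A" by blast
  ultimately show "(\<lambda>n. cinner h (I (F n \<inter> A) a k)) sums cinner h (I (\<Union> (range F) \<inter> A) a k)"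
    by simp
qed

lemma diff_instr:
  assumes "cp_instrument M I" "A \<in> sets M"
  shows "cp_instrument M (\<lambda>B a x. I B a x - I (B \<inter> A) a x)"
  unfolding cp_instrument_def
proof (intro conjI ballI allI impI)
  fix B assume B: "B \<in> sets M"
  then have "(\<lambda>a x. I B a x - I (B \<inter> A) a x) = I (B - A)"
    using instr_diff[OF assms(1) B assms(2)] by (intro ext) simp
  moreover have "cp_map (I (B - A))" using assms B unfolding cp_instrument_def by auto
  ultimately show "cp_map (\<lambda>a x. I B a x - I (B \<inter> A) a x)" by simp
next
  fix a h k and F :: "nat \<Rightarrow> _"
  assume F: "range F \<subseteq> sets M" "disjoint_family F"
  then have "range (\<lambda>n. F n - A) \<subseteq> sets M" "disjoint_family (\<lambda>n. F n - A)"
    using assms(2) by (auto simp: disjoint_family_on_def)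
  then have S: "(\<lambda>n. cinner h (I (F n - A) a k)) sums cinner h (I (\<Union>n. F n - A) a k)"
    using assms(1) unfolding cp_instrument_def by blast
  have U: "(\<Union>n. F n - A) = (\<Union>n. F n) - A" by blast
  have E1: "\<And>n. I (F n) a k - I (F n \<inter> A) a k = I (F n - A) a k"
    using F assms by (intro instr_diff) auto
  have E2: "I (\<Union>n. F n) a k - I ((\<Union>n. F n) \<inter> A) a k = I ((\<Union>n. F n) - A) a k"
    using F assms by (intro instr_diff) auto
  show "(\<lambda>n. cinner h (I (F n) a k - I (F n \<inter> A) a k)) sums
      cinner h (I (\<Union> (range F)) a k - I (\<Union> (range F) \<inter> A) a k)"
    unfolding E1 E2 using S unfolding U .
qed

lemma scaleC_fix_zero:
  assumes "scaleC t v = (v::'a::complex_normed_vector)" "t \<noteq> 1"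
  shows "v = 0"
proof -
  have "scaleC (t - 1) v = scaleC t v + scaleC (-1) v"
    by (simp add: scaleC_add_left[symmetric])
  also have "scaleC (-1) v = - v" using scaleR_scaleC[of "-1" v] by simp
  finally have "scaleC (t - 1) v = 0" using assms(1) by simp
  then have "cmod (t - 1) * norm v = 0" using norm_scaleC[of "t-1" v] by simp
  with assms(2) show ?thesis by simp
qed

theorem corollary2p20:
  fixes M :: "'x measure"
    and I :: "'x set \<Rightarrow> 'a::unital_cstar_algebra \<Rightarrow> ('h::chilbert_space \<Rightarrow> 'h)"
  assumes "pure_instrument M I"
  shows "\<forall>A\<in>sets M. povm_marginal I A = (\<lambda>x. 0) \<or> povm_marginal I A = povm_marginal I (space M)"
proof
  fix A assume A: "A \<in> sets M"
  have ci: "cp_instrument M I" using assms unfolding pure_instrument_def by blast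
  have "dominated_by M (\<lambda>B. I (B \<inter> A)) I"
    unfolding dominated_by_def using restrict_instr[OF ci A] diff_instr[OF ci A] by blast
  then obtain t :: real where t: "\<forall>B\<in>sets M. \<forall>a x. I (B \<inter> A) a x = scaleC (complex_of_real t) (I B a x)"
    using assms unfolding pure_instrument_def by blast
  have t1: "\<And>x. I A 1 x = scaleC (complex_of_real t) (I A 1 x)" using t A by (metis Int_absorb)
  have t2: "\<And>x. I A 1 x = scaleC (complex_of_real t) (I (space M) 1 x)"
    using t A sets.sets_into_space sets.top by (metis inf.absorb2)
  show "povm_marginal I A = (\<lambda>x. 0) \<or> povm_marginal I A = povm_marginal I (space M)"
  proof (cases "t = 1")
    case True
    then show ?thesis using t2 unfolding povm_marginal_def by (simp add: scaleC_one fun_eq_iff)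
  next
    case False
    then have "complex_of_real t \<noteq> 1" by simp
    then have "\<And>x. I A 1 x = 0" using t1 scaleC_fix_zero by metis
    then show ?thesis unfolding povm_marginal_def by (simp add: fun_eq_iff)
  qed
qed

end
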